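(* Let $m > 1$ be an integer and $y \in \mathbb{R}^m$. Then there exists a subset $A \subset \{1,\dots,m\}$ such that $|y(i)| \le 2|y(j)|$ for all $i,j \in A$, and $\|y|_A\|_2 \ge \frac{1}{2.5\sqrt{\log m}}\|y\|_2$.
   Context: $y|_A$ denotes the restriction of $y$ to the coordinates in $A$. Here $\log$ denotes the binary logarithm. *)

theory Defs
  imports "HOL-Analysis.Analysis"
begin

end

theory Submission
  imports Defs
begin

lemma cover_lemma:
  fixes M x :: real
  assumes "M / 2^K < x" "x \<le> M"
  shows "\<exists>k<K. M / 2^(Suc k) < x \<and> x \<le> M / 2^k"
  using assms
proof (induction K)
  case 0 then show ?case by simp
next
  case (Suc K)
  show ?case
  proof (cases "M / 2^K < x")
    case True
    then obtain k where "k<K" "M / 2^(Suc k) < x \<and> x \<le> M / 2^k" using Suc by blast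
    then show ?thesis by (intro exI[of _ k]) auto
  next
    case False
    then show ?thesis using Suc.prems by (intro exI[of _ K]) auto
  qed
qed

theorem lemma3p7:
  fixes m :: nat and y :: "nat \<Rightarrow> real"
  assumes "m > 1"
  shows "\<exists>A. A \<subseteq> {1..m} \<and>
           (\<forall>i\<in>A. \<forall>j\<in>A. \<bar>y i\<bar> \<le> 2 * \<bar>y j\<bar>) \<and>
           L2_set y A \<ge> 1 / (5/2 * sqrt (log 2 (real m))) * L2_set y {1..m}"
proof -
  define S where "S = {1..m}"
  define N2 where "N2 = (\<Sum>i\<in>S. (y i)^2)"
  define L where "L = log 2 (real m)"
  have finS: "finite S" and neS: "S \<noteq> {}" using assms by (auto simp: S_def)
  have cardS: "card S = m" by (simp add: S_def)
  define M where "M = Max ((\<lambda>i. \<bar>y i\<bar>) ` S)"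
  have Mge: "\<And>i. i \<in> S \<Longrightarrow> \<bar>y i\<bar> \<le> M" using finS by (auto simp: M_def)
  have "M \<in> (\<lambda>i. \<bar>y i\<bar>) ` S" unfolding M_def using finS neS by (intro Max_in) auto
  then obtain i0 where i0: "i0 \<in> S" "M = \<bar>y i0\<bar>" by auto
  have M0: "M \<ge> 0" using i0 by simp
  have MN: "M^2 \<le> N2"
  proof -
    have "M^2 = (y i0)^2" using i0 by simp
    also have "\<dots> \<le> N2" unfolding N2_def
      by (rule member_le_sum[OF i0(1)]) (auto simp: finS)
    finally show ?thesis .
  qed
  define K where "K = (LEAST K. m \<le> 2^K)"
  have exK: "m \<le> 2^m" using less_exp[of m] by simp
  have K1: "m \<le> 2^K" unfolding K_def by (rule LeastI[of _ m]) (rule exK)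
  have K0: "K \<noteq> 0" using K1 assms by (cases K) auto
  have K2: "\<not> m \<le> 2^(K-1)" unfolding K_def
    by (rule not_less_Least) (use K0 K_def in auto)
  have L1: "L \<ge> 1" unfolding L_def using assms by simp
  have KL: "real K - 1 < L"
  proof -
    have "(2::real)^(K-1) < real m" using K2
      by (metis not_le of_nat_less_iff of_nat_numeral of_nat_power)
    hence "log 2 ((2::real)^(K-1)) < L" unfolding L_def
      by (subst log_less_cancel_iff) auto
    thus ?thesis using K0 by (simp add: log_nat_power of_nat_diff)
  qed
  define P where "P = (\<lambda>k i. M / 2^(Suc k) < \<bar>y i\<bar> \<and> \<bar>y i\<bar> \<le> M / 2^k)"
  define B where "B = (\<lambda>k. {i\<in>S. P k i})"
  define T where "T = {i\<in>S. \<bar>y i\<bar> \<le> M / 2^K}"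
  define f where "f = (\<lambda>i. (y i)^2)"
  have pt: "f i \<le> (if \<bar>y i\<bar> \<le> M / 2^K then f i else 0) + (\<Sum>k<K. if P k i then f i else 0)"
    if iS: "i \<in> S" for i
  proof (cases "\<bar>y i\<bar> \<le> M / 2^K")
    case True
    have "(\<Sum>k<K. if P k i then f i else 0) \<ge> 0" by (intro sum_nonneg) (auto simp: f_def)
    then show ?thesis using True by simp
  next
    case False
    then obtain k where k: "k<K" "P k i" using cover_lemma[of M K "\<bar>y i\<bar>"] Mge[OF iS]
      by (auto simp: P_def)
    have "f i = (if P k i then f i else 0)" using k by simp
    also have "\<dots> \<le> (\<Sum>k<K. if P k i then f i else 0)"
      by (rule member_le_sum) (use k in \<open>auto simp: f_def\<close>)
    finally show ?thesis using False by simp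
  qed
  have split: "N2 \<le> sum f T + (\<Sum>k<K. sum f (B k))"
  proof -
    have "N2 \<le> (\<Sum>i\<in>S. (if \<bar>y i\<bar> \<le> M / 2^K then f i else 0) + (\<Sum>k<K. if P k i then f i else 0))"
      unfolding N2_def by (rule sum_mono) (use pt in \<open>auto simp: f_def\<close>)
    also have "\<dots> = sum f T + (\<Sum>k<K. sum f (B k))"
      unfolding T_def B_def
      by (simp add: sum.distrib sum.inter_filter[OF finS] sum.swap[of _ S])
    finally show ?thesis .
  qed
  have tail: "sum f T \<le> N2 / 2"
  proof -
    have "sum f T \<le> (\<Sum>i\<in>S. (M / 2^K)^2)"
    proof -
      have "sum f T \<le> sum f S" unfolding T_def
        by (rule sum_mono2[OF finS]) (auto simp: f_def)
      moreover have "sum f T \<le> (\<Sum>i\<in>T. (M / 2^K)^2)"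
        by (rule sum_mono) (use M0 in \<open>auto simp: T_def f_def abs_le_square_iff[symmetric]\<close>)
      moreover have "(\<Sum>i\<in>T. (M / 2^K)^2) \<le> (\<Sum>i\<in>S. (M / 2^K)^2)"
        unfolding T_def by (rule sum_mono2[OF finS]) auto
      ultimately show ?thesis by linarith
    qed
    also have "\<dots> = real m * M^2 / (2^K)^2" by (simp add: cardS power_divide)
    also have "\<dots> \<le> M^2 / 2"
    proof -
      have m2: "real m \<le> 2^K" using K1 by (metis of_nat_le_iff of_nat_numeral of_nat_power)
      have "real m * 2 \<le> real m * real m" using assms by simp
      also have "\<dots> \<le> (2^K)^2" using m2 by (simp add: power2_eq_square mult_mono)
      finally have "real m * 2 \<le> (2^K)^2" .
      then have "real m * 2 * M^2 \<le> (2^K)^2 * M^2" by (rule mult_right_mono) simp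
      then show ?thesis by (simp add: field_simps)
    qed
    also have "\<dots> \<le> N2 / 2" using MN by simp
    finally show ?thesis .
  qed
  have big: "N2 / 2 \<le> (\<Sum>k<K. sum f (B k))" using split tail by linarith
  obtain k where k: "k < K" "sum f (B k) \<ge> N2 / (2 * real K)"
  proof (rule ccontr)
    assume "\<not> thesis"
    with that have "\<forall>k<K. sum f (B k) < N2 / (2 * real K)" by (meson not_le)
    hence "(\<Sum>k<K. sum f (B k)) < (\<Sum>k<K. N2 / (2 * real K))"
      using K0 by (intro sum_strict_mono) auto
    also have "\<dots> = N2 / 2" using K0 by simp
    finally show False using big by simp
  qed
  have N0: "N2 \<ge> 0" unfolding N2_def by (auto intro: sum_nonneg)
  have "N2 / (25/4 * L) \<le> N2 / (2 * real K)"
    using N0 K0 KL L1 by (intro divide_left_mono) auto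
  with k have bk: "N2 / (25/4 * L) \<le> sum f (B k)" by linarith
  show ?thesis
  proof (intro exI[of _ "B k"] conjI ballI)
    show "B k \<subseteq> {1..m}" by (auto simp: B_def S_def)
  next
    fix i j assume "i \<in> B k" "j \<in> B k"
    then have "\<bar>y i\<bar> \<le> M / 2^k" "M / 2^(Suc k) < \<bar>y j\<bar>" by (auto simp: B_def P_def)
    then show "\<bar>y i\<bar> \<le> 2 * \<bar>y j\<bar>" by simp
  next
    have "1 / (5/2 * sqrt (log 2 (real m))) * L2_set y {1..m} = sqrt (N2 / (25/4 * L))"
      using L1 by (simp add: L2_set_def N2_def S_def L_def real_sqrt_divide real_sqrt_mult
          field_simps)
    also have "\<dots> \<le> sqrt (sum f (B k))" using bk by simp
    also have "\<dots> = L2_set y (B k)" by (simp add: L2_set_def f_def)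
    finally show "1 / (5/2 * sqrt (log 2 (real m))) * L2_set y {1..m} \<le> L2_set y (B k)" .
  qed
qed

end
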